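(* $\mathrm{cov}^{*}(\mathcal{Z})\leq\mathrm{cov}^{*}(\mathrm{tr}(\mathcal{N}))\leq\mathfrak{r}$.
   Context: $\mathcal{Z}$ is the density zero ideal on $\omega$: $A\in\mathcal{Z}$ iff $\lim_{n}|A\cap n|/n=0$. $\mathcal{N}$ is the ideal of Lebesgue null subsets of $2^\omega$, and $\mathrm{tr}(\mathcal{N})$ is the ideal on $2^{<\omega}$ of those $A$ with $\{x\in2^{\omega}:x|_{n}\in A$ for infinitely many $n\}\in\mathcal{N}$. For a tall ideal $\mathcal{J}$ on a countable set $X$, $\mathrm{cov}^{*}(\mathcal{J})=\min\{|\mathcal{F}|:\mathcal{F}\subseteq\mathcal{J}$ and for every infinite $Y\subseteq X$ there is $F\in\mathcal{F}$ with $|F\cap Y|=\omega\}$. $\mathfrak{r}$ is the reaping number. *)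

theory Defs
  imports "HOL-Probability.Probability"
begin

definition card_le :: "'a set \<Rightarrow> 'b set \<Rightarrow> bool" where
  "card_le A B \<longleftrightarrow> (\<exists>f. inj_on f A \<and> f ` A \<subseteq> B)"

definition density_zero_ideal :: "nat set set" where
  "density_zero_ideal = {A. (\<lambda>n. real (card (A \<inter> {..<n})) / real n) \<longlonglongrightarrow> 0}"

definition cantor_measure :: "(nat \<Rightarrow> bool) measure" where
  "cantor_measure = PiM UNIV (\<lambda>_. measure_pmf (bernoulli_pmf (1/2)))"

definition cantor_null :: "(nat \<Rightarrow> bool) set set" where
  "cantor_null = {A. \<exists>B \<in> null_sets cantor_measure. A \<subseteq> B}"

definition restr :: "(nat \<Rightarrow> bool) \<Rightarrow> nat \<Rightarrow> bool list" where
  "restr x n = map x [0..<n]"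

definition trN :: "bool list set set" where
  "trN = {A. {x. infinite {n. restr x n \<in> A}} \<in> cantor_null}"

definition covstar_family :: "'a set set \<Rightarrow> 'a set \<Rightarrow> 'a set set \<Rightarrow> bool" where
  "covstar_family J X F \<longleftrightarrow> F \<subseteq> J \<and>
     (\<forall>Y. Y \<subseteq> X \<and> infinite Y \<longrightarrow> (\<exists>A\<in>F. infinite (A \<inter> Y)))"

definition reaping_family :: "nat set set \<Rightarrow> bool" where
  "reaping_family R \<longleftrightarrow> (\<forall>A\<in>R. infinite A) \<and>
     (\<forall>S. \<exists>A\<in>R. finite (A \<inter> S) \<or> finite (A - S))"

end

theory Submission
  imports Defs "HOL-Library.Infinite_Set"
begin


abbreviation "BM \<equiv> (\<lambda>_::nat. measure_pmf (bernoulli_pmf (1/2)))"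

interpretation CP: product_prob_space BM UNIV
  by unfold_locales (auto simp: prob_space_measure_pmf)

lemma space_cantor: "space cantor_measure = UNIV"
  by (auto simp: cantor_measure_def space_PiM)

lemma prob_cantor: "prob_space cantor_measure"
  unfolding cantor_measure_def by (rule CP.P.prob_space_axioms)

lemma cyl_sets: "finite J \<Longrightarrow> {x. \<forall>i\<in>J. x i = v i} \<in> sets cantor_measure"
proof -
  assume J: "finite J"
  have "{x. \<forall>i\<in>J. x i = v i} = {x\<in>space cantor_measure. \<forall>i\<in>J. x i = v i}"
    by (simp add: space_cantor)
  also have "\<dots> \<in> sets cantor_measure" unfolding cantor_measure_def using J
    by measurable
  finally show ?thesis .
qed

lemma cyl_measure: "finite J \<Longrightarrow> emeasure cantor_measure {x. \<forall>i\<in>J. x i = v i} = ennreal ((1/2) ^ card J)"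
proof -
  assume J: "finite J"
  have "{x. \<forall>i\<in>J. x i = v i} = {x\<in>space (Pi\<^sub>M UNIV BM). \<forall>i\<in>J. x i \<in> {v i}}"
    by (auto simp: space_PiM)
  then have "emeasure cantor_measure {x. \<forall>i\<in>J. x i = v i} = (\<Prod>i\<in>J. emeasure (BM i) {v i})"
    unfolding cantor_measure_def using CP.emeasure_PiM_Collect[of J "\<lambda>i. {v i}"] J by simp
  also have "\<dots> = (\<Prod>i\<in>J. ennreal (1/2))"
    by (intro prod.cong refl) (auto simp: emeasure_pmf_single pmf_bernoulli_True pmf_bernoulli_False split: bool.splits)
  also have "\<dots> = ennreal ((1/2) ^ card J)" by (subst prod_ennreal) simp_all
  finally show ?thesis by simp
qed

lemma cyl_measure_real: "finite J \<Longrightarrow> measure cantor_measure {x. \<forall>i\<in>J. x i = v i} = (1/2) ^ card J"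
  by (simp add: measure_def cyl_measure enn2real_ennreal)

lemma restr_eq_iff: "length s = n \<Longrightarrow> (restr x n = s) = (\<forall>i\<in>{..<n}. x i = s ! i)"
  unfolding restr_def by (auto simp: list_eq_iff_nth_eq)

lemma length_restr[simp]: "length (restr x n) = n"
  by (simp add: restr_def)

lemma nth_restr[simp]: "i < n \<Longrightarrow> restr x n ! i = x i"
  by (simp add: restr_def)

definition lev :: "bool list set \<Rightarrow> nat \<Rightarrow> bool list set" where
  "lev A n = {s\<in>A. length s = n}"

lemma finite_lev: "finite (lev A n)"
proof -
  have "lev A n \<subseteq> {xs. set xs \<subseteq> UNIV \<and> length xs = n}" by (auto simp: lev_def)
  moreover have "finite {xs. set xs \<subseteq> (UNIV::bool set) \<and> length xs = n}"
    by (rule finite_lists_length_eq) simp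
  ultimately show ?thesis by (rule finite_subset)
qed

lemma C_eq: "{x. restr x n \<in> A} = (\<Union>s\<in>lev A n. {x. \<forall>i\<in>{..<n}. x i = s!i})"
proof -
  have "restr x n \<in> A \<longleftrightarrow> (\<exists>s\<in>lev A n. \<forall>i\<in>{..<n}. x i = s!i)" for x
  proof
    assume "restr x n \<in> A" then show "\<exists>s\<in>lev A n. \<forall>i\<in>{..<n}. x i = s!i"
      by (intro bexI[of _ "restr x n"]) (auto simp: lev_def)
  next
    assume "\<exists>s\<in>lev A n. \<forall>i\<in>{..<n}. x i = s!i"
    then obtain s where "s \<in> lev A n" "\<forall>i\<in>{..<n}. x i = s!i" by blast
    then show "restr x n \<in> A" using restr_eq_iff[of s n x] by (auto simp: lev_def)
  qed
  then show ?thesis by auto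
qed

lemma C_sets: "{x. restr x n \<in> A} \<in> sets cantor_measure"
  unfolding C_eq by (intro sets.finite_UN finite_lev cyl_sets) auto

lemma C_measure: "measure cantor_measure {x. restr x n \<in> A} = card (lev A n) * (1/2)^n"
proof -
  have "measure cantor_measure {x. restr x n \<in> A} = (\<Sum>s\<in>lev A n. measure cantor_measure {x. \<forall>i\<in>{..<n}. x i = s!i})"
    unfolding C_eq
  proof (rule measure_finite_Union)
    show "disjoint_family_on (\<lambda>s. {x. \<forall>i\<in>{..<n}. x i = s ! i}) (lev A n)"
      unfolding disjoint_family_on_def
    proof (intro ballI impI)
      fix s t assume st: "s \<in> lev A n" "t \<in> lev A n" "s \<noteq> t"
      show "{x. \<forall>i\<in>{..<n}. x i = s ! i} \<inter> {x. \<forall>i\<in>{..<n}. x i = t ! i} = {}"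
      proof (rule ccontr)
        assume "\<not> ?thesis"
        then obtain x where "\<forall>i\<in>{..<n}. x i = s ! i" "\<forall>i\<in>{..<n}. x i = t ! i" by blast
        then have "restr x n = s" "restr x n = t" using st restr_eq_iff by (auto simp: lev_def)
        then show False using st by simp
      qed
    qed
  qed (auto intro: finite_lev cyl_sets simp: cyl_measure)
  also have "\<dots> = (\<Sum>s\<in>lev A n. (1/2)^n)"
    by (intro sum.cong refl) (simp add: cyl_measure_real)
  finally show ?thesis by simp
qed

lemma trN_level:
  assumes "A \<in> trN"
  shows "(\<lambda>n. real (card (lev A n)) / 2^n) \<longlonglongrightarrow> 0"
proof (rule ccontr)
  interpret P: prob_space cantor_measure by (rule prob_cantor)
  define C where "C n = {x. restr x n \<in> A}" for n
  have rC: "real (card (lev A n)) / 2^n = measure cantor_measure (C n)" for n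
    unfolding C_def C_measure by (simp add: power_one_over field_simps)
  assume "\<not> ?thesis"
  then obtain e where e: "e > 0" "\<forall>N. \<exists>n\<ge>N. e \<le> real (card (lev A n)) / 2^n"
    unfolding LIMSEQ_iff by (force simp: not_less)
  define U where "U N = (\<Union>n\<in>{N..}. C n)" for N
  have Usets: "range U \<subseteq> sets cantor_measure"
    unfolding U_def C_def using C_sets by auto
  have Udec: "decseq U" unfolding U_def decseq_def by (auto, meson atLeast_iff order_trans)
  have Ube: "e \<le> measure cantor_measure (U N)" for N
  proof -
    obtain n where n: "n \<ge> N" "e \<le> measure cantor_measure (C n)" using e rC by metis
    have "measure cantor_measure (C n) \<le> measure cantor_measure (U N)"
      using n Usets unfolding U_def by (intro P.finite_measure_mono) (auto simp: C_def C_sets)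
    then show ?thesis using n by simp
  qed
  have "(\<lambda>N. measure cantor_measure (U N)) \<longlonglongrightarrow> measure cantor_measure (\<Inter>N. U N)"
    by (rule P.finite_Lim_measure_decseq[OF Usets Udec])
  then have ge: "e \<le> measure cantor_measure (\<Inter>N. U N)"
    by (rule LIMSEQ_le_const) (use Ube in auto)
  obtain B where B: "B \<in> null_sets cantor_measure" "{x. infinite {n. restr x n \<in> A}} \<subseteq> B"
    using assms unfolding trN_def cantor_null_def by auto
  have sub: "(\<Inter>N. U N) \<subseteq> B"
  proof
    fix x assume "x \<in> (\<Inter>N. U N)"
    then have "\<forall>N. \<exists>n\<ge>N. restr x n \<in> A" unfolding U_def C_def by auto
    then have "infinite {n. restr x n \<in> A}" using infinite_nat_iff_unbounded_le by auto
    then show "x \<in> B" using B by auto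
  qed
  have "(\<Inter>N. U N) \<in> null_sets cantor_measure"
    by (rule null_sets_subset[OF B(1) _ sub]) (use Usets in auto)
  then have "measure cantor_measure (\<Inter>N. U N) = 0" by (simp add: measure_def null_setsD1)
  then show False using ge e by simp
qed


fun bv :: "bool list \<Rightarrow> nat" where
  "bv [] = 0"
| "bv (b # s) = of_bool b + 2 * bv s"

definition hcode :: "bool list \<Rightarrow> nat" where
  "hcode s = 2 ^ length s + bv s"

lemma bv_less: "bv s < 2 ^ length s"
  by (induction s) auto

lemma bv_inj: "length s = length t \<Longrightarrow> bv s = bv t \<Longrightarrow> s = t"
proof (induction s arbitrary: t)
  case Nil then show ?case by simp
next
  case (Cons b s)
  then obtain c t' where t: "t = c # t'" by (cases t) auto
  with Cons.prems have eq: "of_bool b + 2 * bv s = of_bool c + 2 * bv t'" by simp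
  have "b = c"
  proof (rule ccontr)
    assume "b \<noteq> c"
    then show False using eq by (cases b; cases c; simp; presburger)
  qed
  with eq have "bv s = bv t'" by simp
  with \<open>b = c\<close> have "b = c" "bv s = bv t'" by auto
  with Cons t show ?case by auto
qed

lemma hcode_bounds: "2 ^ length s \<le> hcode s" "hcode s < 2 ^ Suc (length s)"
  using bv_less[of s] by (auto simp: hcode_def)

lemma hcode_inj: "inj hcode"
proof (rule injI)
  fix s t assume eq: "hcode s = hcode t"
  have "length s = length t"
  proof (rule ccontr)
    assume ne: "length s \<noteq> length t"
    show False
    proof (cases "length s < length t")
      case True
      then have "(2::nat) ^ Suc (length s) \<le> 2 ^ length t" by (intro power_increasing) auto
      then show False using hcode_bounds[of s] hcode_bounds[of t] eq by linarith
    next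
      case False
      then have "length t < length s" using ne by simp
      then have "(2::nat) ^ Suc (length t) \<le> 2 ^ length s" by (intro power_increasing) auto
      then show False using hcode_bounds[of s] hcode_bounds[of t] eq by linarith
    qed
  qed
  with eq show "s = t" using bv_inj by (auto simp: hcode_def)
qed

lemma hcode_Cons: "hcode (b # s) = of_bool b + 2 * hcode s"
  by (simp add: hcode_def)

lemma hcode_surj: "n \<ge> 1 \<Longrightarrow> n \<in> range hcode"
proof (induction n rule: less_induct)
  case (less n)
  show ?case
  proof (cases "n = 1")
    case True
    have "hcode [] = 1" by (simp add: hcode_def)
    then show ?thesis using True by (metis rangeI)
  next
    case False
    then have n2: "2 \<le> n" using less.prems by linarith
    have h1: "n div 2 \<ge> 1" using n2 by (simp add: div_greater_zero_iff Suc_le_eq)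
    have h2: "n div 2 < n" using n2 by (intro div_less_dividend) auto
    obtain s where s: "hcode s = n div 2" using less.IH[OF h2 h1] by (metis rangeE)
    have "of_bool (odd n) + 2 * (n div 2) = n"
      by (simp add: of_bool_odd_eq_mod_2)
    then have "hcode (odd n # s) = n" by (simp only: hcode_Cons s)
    then show ?thesis by (metis rangeI)
  qed
qed

lemma card_lev_le: "card (lev A L) \<le> 2 ^ L"
proof -
  have "lev A L \<subseteq> {xs. set xs \<subseteq> (UNIV::bool set) \<and> length xs = L}" by (auto simp: lev_def)
  moreover have "finite {xs. set xs \<subseteq> (UNIV::bool set) \<and> length xs = L}"
    by (rule finite_lists_length_eq) simp
  ultimately have "card (lev A L) \<le> card {xs. set xs \<subseteq> (UNIV::bool set) \<and> length xs = L}"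
    by (intro card_mono)
  also have "\<dots> = 2 ^ L" using card_lists_length_eq[of "UNIV::bool set" L] by simp
  finally show ?thesis .
qed

lemma card_lev_le_real: "real (card (lev A L)) \<le> 2 ^ L"
proof -
  have "real (card (lev A L)) \<le> real (2 ^ L)" using card_lev_le by (subst of_nat_le_iff)
  then show ?thesis by simp
qed

lemma count_bound:
  "card (hcode ` A \<inter> {..<N}) \<le> (\<Sum>L\<in>{L. 2^L < N}. card (lev A L))"
proof -
  have fin: "finite {L::nat. 2^L < N}"
    by (rule finite_subset[of _ "{..<N}"]) (auto intro: less_trans[OF less_exp])
  have "hcode ` A \<inter> {..<N} \<subseteq> hcode ` (\<Union>L\<in>{L. 2^L < N}. lev A L)"
  proof
    fix n assume "n \<in> hcode ` A \<inter> {..<N}"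
    then obtain s where s: "s \<in> A" "n = hcode s" "n < N" by auto
    then have "2 ^ length s < N" using hcode_bounds(1)[of s] by linarith
    then show "n \<in> hcode ` (\<Union>L\<in>{L. 2^L < N}. lev A L)" using s by (auto simp: lev_def)
  qed
  then have "card (hcode ` A \<inter> {..<N}) \<le> card (hcode ` (\<Union>L\<in>{L. 2^L < N}. lev A L))"
    by (intro card_mono) (auto intro!: finite_imageI finite_UN_I fin finite_lev)
  also have "\<dots> \<le> card (\<Union>L\<in>{L. 2^L < N}. lev A L)" by (rule card_image_le) (auto intro!: fin finite_lev)
  also have "\<dots> \<le> (\<Sum>L\<in>{L. 2^L < N}. card (lev A L))" by (rule card_UN_le[OF fin])
  finally show ?thesis .
qed

lemma pow_set_eq: assumes N1: "N \<ge> 1" shows "\<exists>K. {L::nat. 2^L < N} = {..<K} \<and> (2::nat)^K \<le> 2 * N"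
proof -
  define K where "K = (LEAST K. N \<le> (2::nat)^K)"
  have ex: "N \<le> (2::nat)^N" by (simp add: less_imp_le)
  have K1: "N \<le> 2^K" unfolding K_def by (rule LeastI[of _ N]) (rule ex)
  have eq: "{L::nat. 2^L < N} = {..<K}"
  proof (intro set_eqI iffI)
    fix L assume "L \<in> {L::nat. 2^L < N}"
    then have "2^L < N" by simp
    show "L \<in> {..<K}"
    proof (rule ccontr)
      assume "L \<notin> {..<K}"
      then have p: "(2::nat)^K \<le> 2^L" by (intro power_increasing) auto
      show False using K1 \<open>2^L < N\<close> p by linarith
    qed
  next
    fix L assume "L \<in> {..<K}"
    then have "\<not> N \<le> 2^L" unfolding K_def using not_less_Least by auto
    then show "L \<in> {L::nat. 2^L < N}" by simp
  qed
  have "(2::nat)^K \<le> 2 * N"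
  proof (cases K)
    case 0 then show ?thesis using N1 by auto
  next
    case (Suc K')
    then have "K' \<in> {L::nat. 2^L < N}" using eq by auto
    then show ?thesis using Suc by auto
  qed
  with eq show ?thesis by blast
qed

lemma density_from_levels:
  assumes lim: "(\<lambda>L. real (card (lev A L)) / 2^L) \<longlonglongrightarrow> 0"
  shows "(\<lambda>N. real (card (hcode ` A \<inter> {..<N})) / real N) \<longlonglongrightarrow> 0"
proof (rule LIMSEQ_I)
  fix r :: real assume r: "r > 0"
  define e where "e = r / 3"
  have e: "e > 0" using r by (simp add: e_def)
  obtain L0 where L0: "\<forall>L\<ge>L0. norm (real (card (lev A L)) / 2^L - 0) < e"
    using LIMSEQ_D[OF lim e] by blast
  then have L0': "real (card (lev A L)) \<le> e * 2^L" if "L \<ge> L0" for L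
    using that by (auto simp: field_simps)
  obtain N0 :: nat where N0: "real N0 > 2^L0 / e" using reals_Archimedean2 by blast
  show "\<exists>no. \<forall>n\<ge>no. norm (real (card (hcode ` A \<inter> {..<n})) / real n - 0) < r"
  proof (intro exI allI impI)
    fix N assume N: "N \<ge> Suc N0"
    obtain K where K: "{L::nat. 2^L < N} = {..<K}" "(2::nat)^K \<le> 2 * N" using pow_set_eq[of N] N by auto
    have "real (card (hcode ` A \<inter> {..<N})) \<le> (\<Sum>L<K. real (card (lev A L)))"
      using count_bound[of A N] K(1) by (simp flip: of_nat_sum)
    also have "\<dots> \<le> (\<Sum>L<K. (if L < L0 then 2^L else e * 2^L))"
    proof (intro sum_mono)
      fix L assume "L \<in> {..<K}"
      show "real (card (lev A L)) \<le> (if L < L0 then 2^L else e * 2^L)"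
        using card_lev_le_real[of A L] L0'[of L] by (cases "L < L0") auto
    qed
    also have "\<dots> \<le> (\<Sum>L<L0. 2^L) + (\<Sum>L<K. e * 2^L)"
    proof -
      have "(\<Sum>L<K. (if L < L0 then 2^L else e * 2^L)) \<le> (\<Sum>L<K. (if L < L0 then 2^L else 0) + e * 2^L)"
        by (intro sum_mono) (use e in auto)
      also have "\<dots> = (\<Sum>L<K. (if L < L0 then (2::real)^L else 0)) + (\<Sum>L<K. e * 2^L)"
        by (simp add: sum.distrib)
      also have "(\<Sum>L<K. (if L < L0 then (2::real)^L else 0)) = (\<Sum>L\<in>{..<K} \<inter> {..<L0}. 2^L)"
        by (simp add: sum.inter_restrict)
      also have "\<dots> \<le> (\<Sum>L<L0. 2^L)" by (intro sum_mono2) auto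
      finally show ?thesis by simp
    qed
    also have "(\<Sum>L<L0. (2::real)^L) \<le> 2^L0"
    proof -
      have "(\<Sum>L<L0. (2::nat)^L) = 2^L0 - 1" using sum_power2[of L0] by (simp add: atLeast0LessThan)
      then have "real (\<Sum>L<L0. (2::nat)^L) \<le> 2^L0" by simp
      then show ?thesis by simp
    qed
    also have "(\<Sum>L<K. e * (2::real)^L) \<le> e * (2 * N)"
    proof -
      have "(\<Sum>L<K. (2::nat)^L) = 2^K - 1" using sum_power2[of K] by (simp add: atLeast0LessThan)
      then have "real (\<Sum>L<K. (2::nat)^L) \<le> 2 * N" using K(2) by linarith
      then have "(\<Sum>L<K. (2::real)^L) \<le> 2 * N" by simp
      then show ?thesis using e by (simp add: sum_distrib_left[symmetric])
    qed
    finally have cb: "real (card (hcode ` A \<inter> {..<N})) \<le> 2^L0 + e * (2 * N)" by simp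
    have Npos: "real N > 0" using N by simp
    have "real N0 < real N" using N by simp
    then have "2^L0 / e < real N" using N0 by linarith
    then have "2^L0 < e * N" using e by (simp add: divide_less_eq mult.commute)
    then have "real (card (hcode ` A \<inter> {..<N})) < 3 * e * N" using cb by simp
    then have "real (card (hcode ` A \<inter> {..<N})) / real N < r"
      using Npos by (simp add: e_def field_simps)
    then show "norm (real (card (hcode ` A \<inter> {..<N})) / real N - 0) < r" by simp
  qed
qed

theorem part1:
  assumes F: "covstar_family trN UNIV F"
  shows "\<exists>G. covstar_family density_zero_ideal UNIV G \<and> card_le G F"
proof -
  define \<phi> where "\<phi> A = hcode ` A" for A
  define G where "G = \<phi> ` F"
  have "G \<subseteq> density_zero_ideal"
  proof
    fix D assume "D \<in> G"
    then obtain A where A: "A \<in> F" "D = \<phi> A" unfolding G_def by auto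
    then have "A \<in> trN" using F unfolding covstar_family_def by auto
    then show "D \<in> density_zero_ideal" unfolding density_zero_ideal_def A(2) \<phi>_def
      using density_from_levels trN_level by auto
  qed
  moreover have "\<exists>D\<in>G. infinite (D \<inter> Y)" if Y: "infinite Y" for Y :: "nat set"
  proof -
    define Y' where "Y' = {s. hcode s \<in> Y}"
    have "Y - {0} \<subseteq> hcode ` Y'"
    proof
      fix n assume n: "n \<in> Y - {0}"
      then obtain s where "n = hcode s" using hcode_surj[of n] by auto
      then show "n \<in> hcode ` Y'" using n unfolding Y'_def by auto
    qed
    moreover have "infinite (Y - {0})" using Y by simp
    ultimately have "infinite Y'" using finite_subset by blast
    then obtain A where A: "A \<in> F" "infinite (A \<inter> Y')" using F unfolding covstar_family_def by auto
    have "hcode ` (A \<inter> Y') \<subseteq> \<phi> A \<inter> Y" unfolding \<phi>_def Y'_def by auto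
    moreover have "infinite (hcode ` (A \<inter> Y'))"
      using A(2) finite_imageD hcode_inj inj_on_subset by blast
    ultimately show ?thesis using A(1) finite_subset unfolding G_def by blast
  qed
  ultimately have "covstar_family density_zero_ideal UNIV G" unfolding covstar_family_def by auto
  moreover have "card_le G F" unfolding card_le_def G_def
    by (intro exI[of _ "inv_into F \<phi>"]) (auto intro: inj_on_inv_into inv_into_into)
  ultimately show ?thesis by blast
qed


definition win :: "nat set \<Rightarrow> nat \<Rightarrow> nat set" where
  "win D k = enumerate D ` {k div 2..<k}"

definition pat :: "bool \<Rightarrow> nat \<Rightarrow> nat \<Rightarrow> bool" where
  "pat b c p = (if p < c then b else \<not> b)"

definition BB :: "nat set \<Rightarrow> bool list set" where
  "BB D = {t. \<exists>k. (\<forall>i<k. enumerate D i < length t) \<and> length t \<le> enumerate D k \<and>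
                 (\<exists>b c. \<forall>p\<in>win D k. t ! p = pat b c p)}"

definition EE :: "nat set \<Rightarrow> nat \<Rightarrow> (nat \<Rightarrow> bool) set" where
  "EE D k = (\<Union>b\<in>UNIV. \<Union>c\<in>insert (enumerate D k) (win D k). {x. \<forall>p\<in>win D k. x p = pat b c p})"

lemma finite_win: "finite (win D k)"
  by (simp add: win_def)

lemma card_win: "infinite D \<Longrightarrow> card (win D k) = k - k div 2"
  unfolding win_def by (subst card_image) (auto intro: inj_on_subset[OF inj_enumerate])

lemma EE_sets: "EE D k \<in> sets cantor_measure"
  unfolding EE_def
  by (intro sets.finite_UN finite_insert[THEN iffD2] finite_win cyl_sets ballI) auto

lemma lin_exp: "real w + 1 \<le> 2 * (3/2) ^ w"
proof (induction w)
  case 0 then show ?case by simp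
next
  case (Suc w)
  show ?case
  proof (cases w)
    case 0 then show ?thesis by simp
  next
    case (Suc w')
    have "real (Suc w) + 1 \<le> (3/2) * (real w + 1)" using Suc by simp
    also have "\<dots> \<le> (3/2) * (2 * (3/2)^w)" using Suc.IH by (intro mult_left_mono) auto
    also have "\<dots> = 2 * (3/2)^(Suc w)" by simp
    finally show ?thesis .
  qed
qed

lemma EE_measure:
  assumes D: "infinite D"
  shows "measure cantor_measure (EE D k) \<le> 4 * (9/10) ^ k"
proof -
  define w where "w = k - k div 2"
  define W where "W = win D k"
  have cW: "card W = w" unfolding W_def w_def using card_win[OF D] .
  have finW: "finite W" unfolding W_def by (rule finite_win)
  define F where "F b = (\<Union>c\<in>insert (enumerate D k) W. {x. \<forall>p\<in>W. x p = pat b c p})" for b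
  have Fle: "measure cantor_measure (F b) \<le> (real w + 1) * (1/2)^w" for b
  proof -
    have "measure cantor_measure (F b) \<le> (\<Sum>c\<in>insert (enumerate D k) W. measure cantor_measure {x. \<forall>p\<in>W. x p = pat b c p})"
      unfolding F_def by (rule measure_UNION_le) (auto intro: finW cyl_sets)
    also have "\<dots> = (\<Sum>c\<in>insert (enumerate D k) W. (1/2)^w)"
      using finW cW by (intro sum.cong refl) (simp add: cyl_measure_real)
    also have "\<dots> = real (card (insert (enumerate D k) W)) * (1/2)^w" by simp
    also have "\<dots> \<le> (real w + 1) * (1/2)^w"
    proof -
      have "card (insert (enumerate D k) W) \<le> w + 1" using finW cW by (simp add: card_insert_if)
      then have "real (card (insert (enumerate D k) W)) \<le> real w + 1" by linarith
      then show ?thesis by (intro mult_right_mono) auto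
    qed
    finally show ?thesis .
  qed
  have "EE D k = (\<Union>b\<in>UNIV. F b)" unfolding EE_def F_def W_def by simp
  moreover have Fsets: "F b \<in> sets cantor_measure" for b
    unfolding F_def by (intro sets.finite_UN finite_insert[THEN iffD2] finW cyl_sets ballI)
  ultimately have "measure cantor_measure (EE D k) \<le> (\<Sum>b\<in>UNIV. measure cantor_measure (F b))"
    by (simp only:) (rule measure_UNION_le, simp, rule Fsets)
  also have "\<dots> \<le> (\<Sum>b\<in>(UNIV::bool set). (real w + 1) * (1/2)^w)"
    by (intro sum_mono Fle)
  also have "\<dots> = 2 * ((real w + 1) * (1/2)^w)" by simp
  also have "\<dots> \<le> 2 * (2 * (3/2)^w * (1/2)^w)"
    using lin_exp[of w] by (intro mult_left_mono mult_right_mono) auto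
  also have "\<dots> = 4 * (3/4)^w" by (simp add: power_mult_distrib[symmetric])
  also have "\<dots> \<le> 4 * (81/100)^w" by (intro mult_left_mono power_mono) auto
  also have "\<dots> = 4 * (9/10)^(2*w)" by (simp add: power_mult power2_eq_square)
  also have "\<dots> \<le> 4 * (9/10)^k" unfolding w_def by (intro mult_left_mono power_decreasing) auto
  finally show ?thesis .
qed

lemma EE_summable: "infinite D \<Longrightarrow> summable (\<lambda>k. measure cantor_measure (EE D k))"
proof (rule summable_comparison_test[where g = "\<lambda>k. 4 * (9/10)^k"])
  assume D: "infinite D"
  show "\<exists>N. \<forall>n\<ge>N. norm (measure cantor_measure (EE D n)) \<le> 4 * (9 / 10) ^ n"
    using EE_measure[OF D] by auto
  show "summable (\<lambda>k. 4 * (9/10::real)^k)" by (intro summable_mult summable_geometric) auto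
qed

lemma win_less: "infinite D \<Longrightarrow> p \<in> win D k \<Longrightarrow> p < enumerate D k"
  unfolding win_def by auto

lemma EE_intro:
  assumes D: "infinite D" and W: "\<forall>p\<in>win D k. x p = pat b c p"
  shows "x \<in> EE D k"
proof -
  define c' where "c' = (if \<exists>p\<in>win D k. c \<le> p then Min {p\<in>win D k. c \<le> p} else enumerate D k)"
  have c'in: "c' \<in> insert (enumerate D k) (win D k)"
  proof (cases "\<exists>p\<in>win D k. c \<le> p")
    case True
    then have "Min {p\<in>win D k. c \<le> p} \<in> {p\<in>win D k. c \<le> p}"
      by (intro Min_in) (auto simp: finite_win)
    then show ?thesis using True unfolding c'_def by auto
  qed (simp add: c'_def)
  have "pat b c p = pat b c' p" if p: "p \<in> win D k" for p
  proof (cases "p < c")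
    case True
    have "p < c'"
    proof (cases "\<exists>p\<in>win D k. c \<le> p")
      case True
      then have "Min {p\<in>win D k. c \<le> p} \<in> {p\<in>win D k. c \<le> p}"
        by (intro Min_in) (auto simp: finite_win)
      then show ?thesis using True \<open>p < c\<close> unfolding c'_def by auto
    next
      case False
      then show ?thesis using win_less[OF D p] unfolding c'_def by auto
    qed
    then show ?thesis using True by (simp add: pat_def)
  next
    case False
    have ex: "\<exists>p\<in>win D k. c \<le> p" using p False by (intro bexI[of _ p]) auto
    have "Min {p\<in>win D k. c \<le> p} \<le> p" using False p by (intro Min_le) (auto simp: finite_win)
    then have "\<not> p < c'" using ex unfolding c'_def by auto
    then show ?thesis using False by (simp add: pat_def)
  qed
  then have "\<forall>p\<in>win D k. x p = pat b c' p" using W by auto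
  then have "x \<in> {x. \<forall>p\<in>win D k. x p = pat b c' p}" by simp
  then have "x \<in> (\<Union>c\<in>insert (enumerate D k) (win D k). {x. \<forall>p\<in>win D k. x p = pat b c p})"
    by (rule UN_I[OF c'in])
  then show ?thesis unfolding EE_def by (rule UN_I[OF UNIV_I])
qed

lemma BB_trN:
  assumes D: "infinite D"
  shows "BB D \<in> trN"
proof -
  interpret P: prob_space cantor_measure by (rule prob_cantor)
  have null: "limsup (EE D) \<in> null_sets cantor_measure"
    by (rule borel_cantelli_limsup1) (auto intro: EE_sets EE_summable[OF D] simp: P.emeasure_eq_measure)
  have "{x. infinite {n. restr x n \<in> BB D}} \<subseteq> limsup (EE D)"
  proof
    fix x assume "x \<in> {x. infinite {n. restr x n \<in> BB D}}"
    then have inf: "infinite {n. restr x n \<in> BB D}" by simp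
    have ex: "\<exists>k\<ge>N. x \<in> EE D k" for N
    proof -
      obtain n where n: "n > enumerate D N" "restr x n \<in> BB D"
        using inf unfolding infinite_nat_iff_unbounded by auto
      then obtain k b c where k: "\<forall>i<k. enumerate D i < n" "n \<le> enumerate D k"
        "\<forall>p\<in>win D k. restr x n ! p = pat b c p"
        unfolding BB_def by auto
      have "\<forall>p\<in>win D k. x p = pat b c p"
      proof
        fix p assume p: "p \<in> win D k"
        then have "p < n" using k(1) unfolding win_def by auto
        have "restr x n ! p = pat b c p" using k(3) p by blast
        then show "x p = pat b c p" using nth_restr[OF \<open>p < n\<close>, of x] by simp
      qed
      then have "x \<in> EE D k" by (rule EE_intro[OF D])
      moreover have "N < k"
      proof -
        have "enumerate D N < enumerate D k" using n(1) k(2) by linarith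
        then show ?thesis using enumerate_mono_iff[OF D] by simp
      qed
      ultimately show ?thesis using less_imp_le by blast
    qed
    show "x \<in> limsup (EE D)" unfolding limsup_INF_SUP
    proof (rule INT_I)
      fix N :: nat
      obtain k where "k \<ge> N" "x \<in> EE D k" using ex by blast
      then show "x \<in> (\<Union>m\<in>{N..}. EE D m)" by blast
    qed
  qed
  then show ?thesis unfolding trN_def cantor_null_def mem_Collect_eq using null by blast
qed


lemma infinite_image_lin:
  assumes "k > 0"
  shows "infinite (range (\<lambda>j::nat. k * j + i))"
proof -
  have "inj (\<lambda>j::nat. k * j + i)" using assms by (intro injI) simp
  then show ?thesis by (rule range_inj_infinite)
qed

lemma split_finite_family:
  assumes fin: "finite \<A>" and inf: "\<And>A. A \<in> \<A> \<Longrightarrow> infinite (A :: nat set)"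
  shows "\<exists>S. \<forall>A\<in>\<A>. infinite (A \<inter> S) \<and> infinite (A - S)"
proof -
  obtain as where as: "set as = \<A>" using finite_list[OF fin] by blast
  show ?thesis
  proof (cases "as = []")
    case True then show ?thesis using as by auto
  next
    case False
    define k where "k = length as"
    have k: "k > 0" using False by (simp add: k_def)
    have infas: "infinite (as ! i)" if "i < k" for i
      using inf as that unfolding k_def by auto
    define nx where "nx = rec_nat (LEAST a. a \<in> as ! 0) (\<lambda>q prev. LEAST a. a \<in> as ! (Suc q mod k) \<and> prev < a)"
    have nx0: "nx 0 = (LEAST a. a \<in> as ! 0)" by (simp add: nx_def)
    have nxS: "nx (Suc q) = (LEAST a. a \<in> as ! (Suc q mod k) \<and> nx q < a)" for q by (simp add: nx_def)
    have nxprop: "nx q \<in> as ! (q mod k) \<and> nx q < nx (Suc q)" for q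
    proof -
      have ex: "\<exists>a. a \<in> as ! (i mod k) \<and> m < a" for i m
      proof -
        have "infinite (as ! (i mod k))" using infas k by simp
        then show ?thesis unfolding infinite_nat_iff_unbounded by auto
      qed
      have a: "nx q \<in> as ! (q mod k)"
      proof (cases q)
        case 0
        have "\<exists>a. a \<in> as ! 0" using ex[of 0 0] by auto
        then show ?thesis using 0 nx0 by (auto intro: LeastI_ex)
      next
        case (Suc q')
        show ?thesis unfolding Suc nxS using LeastI_ex[OF ex[of "Suc q'" "nx q'"]] by blast
      qed
      have b: "nx q < nx (Suc q)" unfolding nxS using LeastI_ex[OF ex[of "Suc q" "nx q"]] by blast
      show ?thesis using a b by blast
    qed
    have smono: "strict_mono nx" using nxprop by (intro strict_monoI_Suc) blast
    have injnx: "inj nx" using smono by (rule strict_mono_imp_inj_on)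
    define S where "S = nx ` {q. even (q div k)}"
    have "infinite (A \<inter> S) \<and> infinite (A - S)" if A: "A \<in> \<A>" for A
    proof -
      obtain i where i: "i < k" "A = as ! i" using A as unfolding k_def by (metis in_set_conv_nth)
      have dm: "(k * j + i) div k = j" "(k * j + i) mod k = i" for j using i k by auto
      have inA: "nx (k * j + i) \<in> A" for j using nxprop[of "k * j + i"] dm i by simp
      have "nx ` range (\<lambda>j. k * (2 * j) + i) \<subseteq> A \<inter> S"
        using inA unfolding S_def by (auto simp: dm)
      moreover have "infinite (nx ` range (\<lambda>j. k * (2 * j) + i))"
      proof -
        have "inj (\<lambda>j::nat. k * (2 * j) + i)" using k by (intro injI) simp
        then have "infinite (range (\<lambda>j::nat. k * (2 * j) + i))" by (rule range_inj_infinite)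
        then show ?thesis using injnx finite_imageD inj_on_subset by blast
      qed
      ultimately have 1: "infinite (A \<inter> S)" using finite_subset by blast
      have "nx ` range (\<lambda>j. k * (2 * j + 1) + i) \<subseteq> A - S"
      proof
        fix y assume "y \<in> nx ` range (\<lambda>j. k * (2 * j + 1) + i)"
        then obtain j where y: "y = nx (k * (2 * j + 1) + i)" by auto
        have "y \<in> A" using inA[of "2 * j + 1"] y by simp
        moreover have "y \<notin> S"
        proof
          assume "y \<in> S"
          then obtain q where q: "even (q div k)" "y = nx q" unfolding S_def by auto
          then have "q = k * (2 * j + 1) + i" using y injnx by (auto dest: injD)
          then show False using q(1) dm[of "2 * j + 1"] by simp
        qed
        ultimately show "y \<in> A - S" by simp
      qed
      moreover have "infinite (nx ` range (\<lambda>j. k * (2 * j + 1) + i))"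
      proof -
        have "inj (\<lambda>j::nat. k * (2 * j + 1) + i)" using k by (intro injI) simp
        then have "infinite (range (\<lambda>j::nat. k * (2 * j + 1) + i))" by (rule range_inj_infinite)
        then show ?thesis using injnx finite_imageD inj_on_subset by blast
      qed
      ultimately have 2: "infinite (A - S)" using finite_subset by blast
      show ?thesis using 1 2 by blast
    qed
    then show ?thesis by blast
  qed
qed

lemma reaping_infinite:
  assumes "reaping_family R"
  shows "infinite R"
proof
  assume fin: "finite R"
  have "\<And>A. A \<in> R \<Longrightarrow> infinite A" using assms unfolding reaping_family_def by auto
  then obtain S where S: "\<forall>A\<in>R. infinite (A \<inter> S) \<and> infinite (A - S)"
    using split_finite_family[OF fin] by blast
  then show False using assms unfolding reaping_family_def by blast
qed

lemma square_inj:
  assumes "infinite (R :: 'a set)"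
  shows "\<exists>g. inj_on g (R \<times> R) \<and> g ` (R \<times> R) \<subseteq> R"
proof -
  have "(card_of (R \<times> R), card_of R) \<in> ordIso" using card_of_Times_same_infinite[OF assms] .
  then have "(card_of (R \<times> R), card_of R) \<in> ordLeq" using ordIso_iff_ordLeq by blast
  then show ?thesis using card_of_ordLeq by blast
qed


definition ext :: "bool list set \<Rightarrow> bool list \<Rightarrow> bool list set" where
  "ext Y s = {y\<in>Y. take (length s) y = s}"

lemma ext_split: "ext Y s \<subseteq> {s} \<union> ext Y (s @ [True]) \<union> ext Y (s @ [False])"
proof
  fix y assume y: "y \<in> ext Y s"
  then have yY: "y \<in> Y" and t: "take (length s) y = s" by (auto simp: ext_def)
  show "y \<in> {s} \<union> ext Y (s @ [True]) \<union> ext Y (s @ [False])"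
  proof (cases "length y \<le> length s")
    case True
    then have "y = s" using t by simp
    then show ?thesis by simp
  next
    case False
    then have "take (Suc (length s)) y = s @ [y ! length s]"
      using t by (simp add: take_Suc_conv_app_nth)
    then show ?thesis using yY by (cases "y ! length s") (auto simp: ext_def)
  qed
qed

lemma koenig:
  assumes Y: "infinite Y"
  shows "\<exists>x. \<forall>m. infinite {y\<in>Y. take m y = restr x m}"
proof -
  define nxt where "nxt s = (if infinite (ext Y (s @ [True])) then s @ [True] else s @ [False])" for s
  define \<sigma> where "\<sigma> = rec_nat [] (\<lambda>_ s. nxt s)"
  have s0: "\<sigma> 0 = []" and sS: "\<sigma> (Suc m) = nxt (\<sigma> m)" for m by (simp_all add: \<sigma>_def)
  have inv: "infinite (ext Y (\<sigma> m)) \<and> length (\<sigma> m) = m" for m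
  proof (induction m)
    case 0
    have "ext Y [] = Y" by (auto simp: ext_def)
    then show ?case using Y s0 by simp
  next
    case (Suc m)
    have "infinite (ext Y (nxt (\<sigma> m)))"
    proof (cases "infinite (ext Y (\<sigma> m @ [True]))")
      case True then show ?thesis by (simp add: nxt_def)
    next
      case False
      have "infinite ({\<sigma> m} \<union> ext Y (\<sigma> m @ [True]) \<union> ext Y (\<sigma> m @ [False]))"
        using Suc.IH ext_split[of Y "\<sigma> m"] finite_subset by blast
      then have "infinite (ext Y (\<sigma> m @ [False]))" using False by simp
      then show ?thesis using False by (simp add: nxt_def)
    qed
    moreover have "length (nxt (\<sigma> m)) = Suc m" using Suc.IH by (simp add: nxt_def)
    ultimately show ?case by (simp add: sS)
  qed
  define x where "x m = \<sigma> (Suc m) ! m" for m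
  have rx: "restr x m = \<sigma> m" for m
  proof (induction m)
    case 0 then show ?case by (simp add: s0 restr_def)
  next
    case (Suc m)
    have "\<exists>b. \<sigma> (Suc m) = \<sigma> m @ [b]"
      unfolding sS nxt_def by (cases "infinite (ext Y (\<sigma> m @ [True]))") auto
    then obtain b where b: "\<sigma> (Suc m) = \<sigma> m @ [b]" by blast
    have lm: "length (\<sigma> m) = m" using inv by simp
    have "x m = b" unfolding x_def b using lm nth_append_length by metis
    then have "restr x (Suc m) = restr x m @ [b]" by (simp add: restr_def)
    then show ?case using Suc.IH b by simp
  qed
  have "infinite {y\<in>Y. take m y = restr x m}" for m
  proof -
    have "infinite (ext Y (\<sigma> m))" "length (\<sigma> m) = m" using inv[of m] by auto
    then show ?thesis unfolding ext_def rx by simp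
  qed
  then show ?thesis by blast
qed

lemma seq_exists:
  assumes Y: "infinite Y"
  shows "\<exists>x L y. L 0 = 0 \<and> (\<forall>j. L j < L (Suc j)) \<and>
     (\<forall>j. y j \<in> Y \<and> take (L j) (y j) = restr x (L j) \<and> length (y j) = L (Suc j))"
proof -
  obtain x where x: "\<forall>m. infinite {y\<in>Y. take m y = restr x m}" using koenig[OF Y] by blast
  have ex: "\<exists>y. y \<in> Y \<and> take m y = restr x m \<and> m < length y" for m
  proof -
    have "infinite ({y\<in>Y. take m y = restr x m} - {restr x m})" using x by simp
    then have "({y\<in>Y. take m y = restr x m} - {restr x m}) \<noteq> {}" by (metis finite.emptyI)
    then obtain y where "y \<in> {y\<in>Y. take m y = restr x m} - {restr x m}" by blast
    then have y: "y \<in> Y" "take m y = restr x m" "y \<noteq> restr x m" by auto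
    have "m < length y"
    proof (rule ccontr)
      assume "\<not> m < length y"
      then have "take m y = y" by simp
      then show False using y by simp
    qed
    then show ?thesis using y by blast
  qed
  define step where "step m = (SOME y. y \<in> Y \<and> take m y = restr x m \<and> m < length y)" for m
  have st: "step m \<in> Y \<and> take m (step m) = restr x m \<and> m < length (step m)" for m
    unfolding step_def by (rule someI_ex[OF ex])
  define L where "L = rec_nat 0 (\<lambda>_ l. length (step l))"
  have L0: "L 0 = 0" and LS: "L (Suc j) = length (step (L j))" for j by (simp_all add: L_def)
  define y where "y j = step (L j)" for j
  show ?thesis
    by (intro exI[of _ x] exI[of _ L] exI[of _ y]) (use st in \<open>auto simp: L0 LS y_def\<close>)
qed


lemma reap_side:
  assumes "finite (A \<inter> {p. c p}) \<or> finite (A - {p. c p})"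
  shows "\<exists>b. finite {p\<in>A. c p \<noteq> b}"
proof (cases "finite (A \<inter> {p. c p})")
  case True
  have "{p\<in>A. c p \<noteq> False} = A \<inter> {p. c p}" by auto
  then have "finite {p\<in>A. c p \<noteq> False}" using True by simp
  then show ?thesis by (rule exI)
next
  case False
  then have "finite (A - {p. c p})" using assms by blast
  moreover have "{p\<in>A. c p \<noteq> True} = A - {p. c p}" by auto
  ultimately have "finite {p\<in>A. c p \<noteq> True}" by simp
  then show ?thesis by (rule exI)
qed

lemma cover_Y:
  assumes R: "reaping_family R" and Y: "infinite (Y :: bool list set)"
  shows "\<exists>A1\<in>R. \<exists>A2\<in>R. infinite (BB (enumerate A1 ` A2) \<inter> Y)"
proof -
  obtain x L y where L0: "L 0 = 0" and Lmono: "\<forall>j. L j < L (Suc j)"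
    and yp: "\<forall>j. y j \<in> Y \<and> take (L j) (y j) = restr x (L j) \<and> length (y j) = L (Suc j)"
    using seq_exists[OF Y] by blast
  have smL: "strict_mono L" using Lmono by (intro strict_monoI_Suc) auto
  have Lge: "j \<le> L j" for j using smL by (rule strict_mono_imp_increasing)
  define J where "J p = (LEAST j. p < L (Suc j))" for p
  have Jeq: "J p = j" if "L j \<le> p" "p < L (Suc j)" for p j
    unfolding J_def
  proof (rule Least_equality)
    show "p < L (Suc j)" by fact
    fix j' assume j': "p < L (Suc j')"
    show "j \<le> j'"
    proof (rule ccontr)
      assume "\<not> j \<le> j'"
      then have "Suc j' \<le> j" by simp
      then have "L (Suc j') \<le> L j" using smL by (simp add: strict_mono_less_eq)
      then show False using j' that by simp
    qed
  qed
  define z where "z p = y (J p) ! p" for p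
  have Rinf: "\<And>A. A \<in> R \<Longrightarrow> infinite A" using R unfolding reaping_family_def by auto
  obtain A1 where A1: "A1 \<in> R" "finite (A1 \<inter> {p. x p}) \<or> finite (A1 - {p. x p})"
    using R unfolding reaping_family_def by blast
  obtain b1 where b1: "finite {p\<in>A1. x p \<noteq> b1}" using reap_side[OF A1(2)] by blast
  have inf1: "infinite A1" using Rinf A1(1) by blast
  define e1 where "e1 = enumerate A1"
  obtain A2 where A2: "A2 \<in> R" "finite (A2 \<inter> {n. z (e1 n)}) \<or> finite (A2 - {n. z (e1 n)})"
    using R unfolding reaping_family_def by blast
  obtain b2 where b2: "finite {n\<in>A2. z (e1 n) \<noteq> b2}" using reap_side[OF A2(2)] by blast
  have inf2: "infinite A2" using Rinf A2(1) by blast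
  define D where "D = e1 ` A2"
  have injE1: "inj e1" unfolding e1_def using inf1 by (rule inj_enumerate)
  have infD: "infinite D" unfolding D_def using inf2 injE1 finite_imageD inj_on_subset by blast
  have DA1: "D \<subseteq> A1" unfolding D_def e1_def using enumerate_in_set[OF inf1] by auto
  define Bad where "Bad = {p\<in>D. x p \<noteq> b1 \<or> z p \<noteq> b2}"
  have "Bad \<subseteq> {p\<in>A1. x p \<noteq> b1} \<union> e1 ` {n\<in>A2. z (e1 n) \<noteq> b2}"
    unfolding Bad_def D_def using DA1 D_def by auto
  then have "finite Bad" using b1 b2 finite_subset by blast
  then obtain M where M: "Bad \<subseteq> {..<M}" using finite_nat_iff_bounded by blast
  define e where "e = enumerate D"
  define j0 where "j0 = e (2 * M)"
  have mem: "y j \<in> BB D" if j: "j \<ge> j0" for j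
  proof -
    define l where "l = L (Suc j)"
    have ll: "length (y j) = l" using yp l_def by simp
    have lgt: "e (2 * M) < l" using Lge[of "Suc j"] j unfolding j0_def l_def by simp
    have exk: "\<exists>k. l \<le> e k" using le_enumerate[OF infD, of l] unfolding e_def by blast
    define k where "k = (LEAST k. l \<le> e k)"
    have hk1: "l \<le> e k" unfolding k_def using exk by (rule LeastI_ex)
    have hk2: "e i < l" if "i < k" for i
      using not_less_Least[OF that[unfolded k_def]] by simp
    have Mk: "2 * M < k"
    proof -
      have "e (2 * M) < e k" using lgt hk1 by simp
      then show ?thesis unfolding e_def using enumerate_mono_iff[OF infD] by simp
    qed
    define c where "c = (if b2 = b1 then l else L j)"
    have "\<forall>p\<in>win D k. y j ! p = pat b1 c p"
    proof
      fix p assume p: "p \<in> win D k"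
      then obtain i where i: "k div 2 \<le> i" "i < k" "p = e i" unfolding win_def e_def by auto
      have pD: "p \<in> D" using i(3) enumerate_in_set[OF infD] unfolding e_def by simp
      have "i \<le> p" using i(3) le_enumerate[OF infD] unfolding e_def by simp
      then have "M \<le> p" using i(1) Mk by linarith
      then have "p \<notin> Bad" using M by auto
      then have xz: "x p = b1" "z p = b2" using pD unfolding Bad_def by auto
      have pl: "p < l" using hk2 i by simp
      show "y j ! p = pat b1 c p"
      proof (cases "p < L j")
        case True
        have "y j ! p = take (L j) (y j) ! p" using True by simp
        also have "\<dots> = restr x (L j) ! p" using yp by simp
        also have "\<dots> = x p" using True by simp
        finally have "y j ! p = b1" using xz by simp
        moreover have "p < c" using True pl unfolding c_def by auto
        ultimately show ?thesis by (simp add: pat_def)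
      next
        case False
        then have "J p = j" using pl unfolding l_def by (intro Jeq) auto
        then have "y j ! p = b2" using xz unfolding z_def by simp
        then show ?thesis using False pl unfolding c_def pat_def by auto
      qed
    qed
    moreover have "\<forall>i<k. e i < length (y j)" using hk2 ll by simp
    moreover have "length (y j) \<le> e k" using hk1 ll by simp
    ultimately show ?thesis unfolding BB_def e_def by blast
  qed
  have "y ` {j0..} \<subseteq> BB D \<inter> Y" using mem yp by auto
  moreover have "infinite (y ` {j0..})"
  proof -
    have "inj y"
    proof (rule injI)
      fix a b assume "y a = y b"
      then have "L (Suc a) = L (Suc b)" using yp by metis
      then show "a = b" using smL by (simp add: strict_mono_eq)
    qed
    then show ?thesis using finite_imageD inj_on_subset infinite_Ici by blast
  qed
  ultimately have "infinite (BB D \<inter> Y)" using finite_subset by blast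
  then show ?thesis using A1(1) A2(1) unfolding D_def e1_def by blast
qed

theorem part2:
  assumes R: "reaping_family R"
  shows "\<exists>F. covstar_family trN UNIV F \<and> card_le F R"
proof -
  define \<phi> where "\<phi> = (\<lambda>(A1, A2). BB (enumerate A1 ` A2))"
  define F where "F = \<phi> ` (R \<times> R)"
  have Rinf: "\<And>A. A \<in> R \<Longrightarrow> infinite A" using R unfolding reaping_family_def by auto
  have "F \<subseteq> trN"
  proof
    fix B assume "B \<in> F"
    then obtain A1 A2 where A: "A1 \<in> R" "A2 \<in> R" "B = BB (enumerate A1 ` A2)"
      unfolding F_def \<phi>_def by auto
    have "inj (enumerate A1)" using Rinf[OF A(1)] by (rule inj_enumerate)
    then have "infinite (enumerate A1 ` A2)" using Rinf[OF A(2)] finite_imageD inj_on_subset by blast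
    then show "B \<in> trN" using A(3) BB_trN by simp
  qed
  moreover have "\<exists>B\<in>F. infinite (B \<inter> Y)" if Yinf: "infinite Y" for Y
  proof -
    obtain A1 A2 where "A1 \<in> R" "A2 \<in> R" "infinite (BB (enumerate A1 ` A2) \<inter> Y)"
      using cover_Y[OF R Yinf] by blast
    then show ?thesis unfolding F_def \<phi>_def by force
  qed
  ultimately have "covstar_family trN UNIV F" unfolding covstar_family_def by auto
  moreover have "card_le F R"
  proof -
    obtain g where g: "inj_on g (R \<times> R)" "g ` (R \<times> R) \<subseteq> R"
      using square_inj[OF reaping_infinite[OF R]] by blast
    define f where "f = g \<circ> inv_into (R \<times> R) \<phi>"
    have "inj_on (inv_into (R \<times> R) \<phi>) F" unfolding F_def by (rule inj_on_inv_into) simp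
    moreover have "inv_into (R \<times> R) \<phi> ` F \<subseteq> R \<times> R" unfolding F_def
      by (rule image_subsetI) (rule inv_into_into)
    ultimately have "inj_on f F" unfolding f_def using g(1) by (auto intro: comp_inj_on inj_on_subset)
    moreover have "f ` F \<subseteq> R" unfolding f_def using g(2) \<open>inv_into (R \<times> R) \<phi> ` F \<subseteq> R \<times> R\<close> by auto
    ultimately show ?thesis unfolding card_le_def by blast
  qed
  ultimately show ?thesis by blast
qed


theorem mainTheorem8:
  shows "(\<forall>F. covstar_family trN UNIV F \<longrightarrow>
            (\<exists>G. covstar_family density_zero_ideal UNIV G \<and> card_le G F))
       \<and> (\<forall>R. reaping_family R \<longrightarrow>
            (\<exists>F. covstar_family trN UNIV F \<and> card_le F R))"
  using part1 part2 by blast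

end
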